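(* Let $\mathcal{G}=(G,\lambda)$ be a simple temporal clique, $G=(V,E)$, and let $\mathcal{T}^+=(V,E^+_T)$ be obtained by the backward construction. Then the backward fireworks cover $S^+_T=\{\{u,v\}\in E:(u,v)\in E^+_T\}\cup\{\{u,v\}\in E: u \text{ is a collector}\}$ is a temporal spanner of $\mathcal{G}$.
   Context: A simple temporal clique is a pair $\mathcal{G}=(G,\lambda)$ where $G=(V,E)$ is the complete graph on a finite vertex set $V$ and $\lambda:E\to\mathbb{N}$ assigns to each edge a single integer label such that any two distinct edges sharing an endpoint have different labels; the label of an arc $(x,y)$ is $\lambda(\{x,y\})$. A journey from $x$ to $y$ is a sequence of vertices $x=u_0,\dots,u_k=y$ ($k\ge1$) with $\lambda(\{u_{i-1},u_i\})<\lambda(\{u_i,u_{i+1}\})$ for $1\le i<k$. A set $E'\subseteq E$ is a temporal spanner of $\mathcal{G}$ if for every ordered pair of distinct vertices $x,y$ there is a journey from $x$ to $y$ using only edges of $E'$. For a vertex $v$, $e^+(v)$ is the edge incident to $v$ with largest label. Backward construction: let $E^+$ be the set of arcs $(v,u)$ with $\{u,v\}=e^+(v)$, except that if $e^+(u)=e^+(v)=\{u,v\}$ only one of the two arcs $(u,v),(v,u)$ is included (arbitrarily). Initialize $E^+_T:=E^+$. For every vertex $v$ of in-degree at least $2$ in $(V,E^+)$, let $(u_1,v),\dots,(u_\ell,v)$ be its in-arcs in $E^+$, where $(u_\ell,v)$ has the smallest label; for each $i<\ell$, if $u_i$ has in-degree $0$ in $(V,E^+)$, replace $(u_i,v)$ by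 $(v,u_i)$ in $E^+_T$, and otherwise remove $(u_i,v)$ from $E^+_T$. Set $\mathcal{T}^+=(V,E^+_T)$. A collector is a vertex of in-degree $0$ in $\mathcal{T}^+$. *)

theory Defs
  imports Main
begin

text \<open>Vertices have type 'a, V is a finite vertex set, edges of the complete graph
  are two-element sets, and the labelling is lam :: 'a set => nat (only its values on
  edges matter).\<close>

definition clique_edges :: "'a set \<Rightarrow> 'a set set" where
  "clique_edges V = {{u, v} | u v. u \<in> V \<and> v \<in> V \<and> u \<noteq> v}"

definition simple_temporal_clique :: "'a set \<Rightarrow> ('a set \<Rightarrow> nat) \<Rightarrow> bool" where
  "simple_temporal_clique V lam \<longleftrightarrow> finite V \<and>
     (\<forall>e\<in>clique_edges V. \<forall>f\<in>clique_edges V. e \<noteq> f \<and> e \<inter> f \<noteq> {} \<longrightarrow> lam e \<noteq> lam f)"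

definition journey :: "'a set \<Rightarrow> ('a set \<Rightarrow> nat) \<Rightarrow> 'a set set \<Rightarrow> 'a \<Rightarrow> 'a \<Rightarrow> 'a list \<Rightarrow> bool" where
  "journey V lam E' x y ps \<longleftrightarrow>
     length ps \<ge> 2 \<and> hd ps = x \<and> last ps = y \<and>
     (\<forall>i < length ps - 1. {ps ! i, ps ! Suc i} \<in> E' \<and> {ps ! i, ps ! Suc i} \<in> clique_edges V) \<and>
     (\<forall>i. Suc i < length ps - 1 \<longrightarrow> lam {ps ! i, ps ! Suc i} < lam {ps ! Suc i, ps ! Suc (Suc i)})"

definition temporal_spanner :: "'a set \<Rightarrow> ('a set \<Rightarrow> nat) \<Rightarrow> 'a set set \<Rightarrow> bool" where
  "temporal_spanner V lam E' \<longleftrightarrow> E' \<subseteq> clique_edges V \<and>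
     (\<forall>x\<in>V. \<forall>y\<in>V. x \<noteq> y \<longrightarrow> (\<exists>ps. journey V lam E' x y ps))"

text \<open>e^+(v): the edge incident to v with largest label (unique by properness).\<close>
definition eplus :: "'a set \<Rightarrow> ('a set \<Rightarrow> nat) \<Rightarrow> 'a \<Rightarrow> 'a set" where
  "eplus V lam v = (THE e. e \<in> clique_edges V \<and> v \<in> e \<and>
       (\<forall>f\<in>clique_edges V. v \<in> f \<longrightarrow> lam f \<le> lam e))"

definition eplus_arcs_full :: "'a set \<Rightarrow> ('a set \<Rightarrow> nat) \<Rightarrow> ('a \<times> 'a) set" where
  "eplus_arcs_full V lam = {(v, u). v \<in> V \<and> u \<in> V \<and> u \<noteq> v \<and> {u, v} = eplus V lam v}"

text \<open>A valid choice of E^+: all candidate arcs, except that for each pair with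
  e^+(u) = e^+(v) = {u,v} exactly one of the two opposite arcs is kept (arbitrarily).\<close>
definition is_Eplus :: "'a set \<Rightarrow> ('a set \<Rightarrow> nat) \<Rightarrow> ('a \<times> 'a) set \<Rightarrow> bool" where
  "is_Eplus V lam A \<longleftrightarrow> A \<subseteq> eplus_arcs_full V lam \<and>
     (\<forall>(v, u) \<in> eplus_arcs_full V lam. (v, u) \<notin> A \<longrightarrow> (u, v) \<in> A) \<and>
     (\<forall>(v, u) \<in> A. (u, v) \<notin> A)"

definition indeg :: "('a \<times> 'a) set \<Rightarrow> 'a \<Rightarrow> nat" where
  "indeg A v = card {u. (u, v) \<in> A}"

definition min_in_arc :: "('a set \<Rightarrow> nat) \<Rightarrow> ('a \<times> 'a) set \<Rightarrow> 'a \<Rightarrow> 'a \<Rightarrow> bool" where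
  "min_in_arc lam A u v \<longleftrightarrow> (u, v) \<in> A \<and> (\<forall>w. (w, v) \<in> A \<longrightarrow> lam {u, v} \<le> lam {w, v})"

definition backward_ET :: "('a set \<Rightarrow> nat) \<Rightarrow> ('a \<times> 'a) set \<Rightarrow> ('a \<times> 'a) set" where
  "backward_ET lam A =
     {(u, v). (u, v) \<in> A \<and> (indeg A v < 2 \<or> min_in_arc lam A u v)} \<union>
     {(v, u) | u v. (u, v) \<in> A \<and> indeg A v \<ge> 2 \<and> \<not> min_in_arc lam A u v \<and> indeg A u = 0}"

definition collector :: "'a set \<Rightarrow> ('a \<times> 'a) set \<Rightarrow> 'a \<Rightarrow> bool" where
  "collector V T u \<longleftrightarrow> u \<in> V \<and> indeg T u = 0"

definition fireworks_cover :: "'a set \<Rightarrow> ('a \<times> 'a) set \<Rightarrow> 'a set set" where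
  "fireworks_cover V T =
     {{u, v} | u v. {u, v} \<in> clique_edges V \<and> (u, v) \<in> T} \<union>
     {{u, v} | u v. {u, v} \<in> clique_edges V \<and> collector V T u}"

end

theory Submission
  imports Defs
begin

lemma edge_iff: "{u, v} \<in> clique_edges V \<longleftrightarrow> u \<in> V \<and> v \<in> V \<and> u \<noteq> v"
  unfolding clique_edges_def by (auto simp: doubleton_eq_iff)


lemma journey2:
  assumes "{z, y} \<in> E'" "{z, y} \<in> clique_edges V"
  shows "journey V lam E' z y [z, y]"
  using assms unfolding journey_def by auto

lemma journey_snoc:
  assumes J: "journey V lam E' x z (qs @ [w, z])"
    and e: "{z, y} \<in> E'" "{z, y} \<in> clique_edges V"
    and l: "lam {w, z} < lam {z, y}"
  shows "journey V lam E' x y (qs @ [w, z, y])"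
proof -
  let ?p = "qs @ [w, z]" and ?q = "qs @ [w, z, y]"
  define n where "n = length qs"
  have lp: "length ?p = n + 2" and lq: "length ?q = n + 3" by (simp_all add: n_def)
  have same: "?q ! j = ?p ! j" if "j < n + 2" for j
  proof -
    have "?q = ?p @ [y]" by simp
    moreover have "j < n \<or> j = n \<or> j = Suc n" using that by auto
    ultimately show ?thesis using lp by (auto simp: nth_append n_def)
  qed
  have qz: "?q ! (n + 1) = z" and qy: "?q ! (n + 2) = y" and pw: "?p ! n = w"
    by (simp_all add: n_def nth_append)
  have J1: "hd ?p = x" "\<forall>i < n + 1. {?p ! i, ?p ! Suc i} \<in> E' \<and> {?p ! i, ?p ! Suc i} \<in> clique_edges V"
    "\<forall>i. Suc i < n + 1 \<longrightarrow> lam {?p ! i, ?p ! Suc i} < lam {?p ! Suc i, ?p ! Suc (Suc i)}"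
    using J lp unfolding journey_def by auto
  have hq: "hd ?q = x" using J1(1) by (cases qs) auto
  have E: "{?q ! i, ?q ! Suc i} \<in> E' \<and> {?q ! i, ?q ! Suc i} \<in> clique_edges V" if "i < n + 2" for i
  proof (cases "i < n + 1")
    case True thus ?thesis using J1(2) same[of i] same[of "Suc i"] by simp
  next
    case False hence "i = n + 1" using that by simp
    thus ?thesis using qz qy e by simp
  qed
  have L: "lam {?q ! i, ?q ! Suc i} < lam {?q ! Suc i, ?q ! Suc (Suc i)}" if "Suc i < n + 2" for i
  proof (cases "Suc i < n + 1")
    case True thus ?thesis using J1(3) same[of i] same[of "Suc i"] same[of "Suc (Suc i)"] by simp
  next
    case False hence "i = n" using that by simp
    moreover have "?q ! n = w" using same[of n] pw by simp
    ultimately show ?thesis using qz qy l by simp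
  qed
  show ?thesis unfolding journey_def using lq hq E L by simp
qed

context
  fixes V :: "'a set" and lam :: "'a set \<Rightarrow> nat" and A :: "('a \<times> 'a) set"
  assumes stc: "simple_temporal_clique V lam"
    and EA: "is_Eplus V lam A"
begin

lemma finV: "finite V" using stc unfolding simple_temporal_clique_def by simp

lemma proper: "e \<in> clique_edges V \<Longrightarrow> f \<in> clique_edges V \<Longrightarrow> e \<noteq> f \<Longrightarrow> e \<inter> f \<noteq> {} \<Longrightarrow> lam e \<noteq> lam f"
  using stc unfolding simple_temporal_clique_def by blast

lemma A_sub: "(v, u) \<in> A \<Longrightarrow> v \<in> V \<and> u \<in> V \<and> u \<noteq> v \<and> {u, v} = eplus V lam v"
  using EA unfolding is_Eplus_def eplus_arcs_full_def by blast

lemma A_asym: "(v, u) \<in> A \<Longrightarrow> (u, v) \<notin> A"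
  using EA unfolding is_Eplus_def by blast

lemma eplus_prop:
  assumes "v \<in> V" "u \<in> V" "u \<noteq> v"
  shows "eplus V lam v \<in> clique_edges V \<and> v \<in> eplus V lam v \<and>
       (\<forall>f\<in>clique_edges V. v \<in> f \<longrightarrow> lam f \<le> lam (eplus V lam v))"
proof -
  let ?F = "{f \<in> clique_edges V. v \<in> f}"
  have "clique_edges V \<subseteq> Pow V" unfolding clique_edges_def by auto
  moreover have "finite (Pow V)" using finV by simp
  ultimately have "finite (clique_edges V)" by (rule finite_subset)
  moreover have "?F \<subseteq> clique_edges V" by blast
  ultimately have finF: "finite ?F" using finite_subset by blast
  have "{u, v} \<in> ?F" using assms by (simp add: edge_iff)
  hence ne: "lam ` ?F \<noteq> {}" by blast
  have fi: "finite (lam ` ?F)" using finF by (rule finite_imageI)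
  have "Max (lam ` ?F) \<in> lam ` ?F" using Max_in[OF fi ne] .
  then obtain e where e: "e \<in> ?F" "lam e = Max (lam ` ?F)" by auto
  have emax: "\<forall>f\<in>?F. lam f \<le> lam e"
  proof
    fix f assume "f \<in> ?F"
    hence "lam f \<in> lam ` ?F" by (rule imageI)
    hence "lam f \<le> Max (lam ` ?F)" using Max_ge[OF fi] by blast
    thus "lam f \<le> lam e" using e(2) by simp
  qed
  have ex: "\<exists>!e. e \<in> clique_edges V \<and> v \<in> e \<and> (\<forall>f\<in>clique_edges V. v \<in> f \<longrightarrow> lam f \<le> lam e)"
  proof (rule ex1I[of _ e])
    show "e \<in> clique_edges V \<and> v \<in> e \<and> (\<forall>f\<in>clique_edges V. v \<in> f \<longrightarrow> lam f \<le> lam e)"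
      using e emax by auto
  next
    fix e' assume h: "e' \<in> clique_edges V \<and> v \<in> e' \<and> (\<forall>f\<in>clique_edges V. v \<in> f \<longrightarrow> lam f \<le> lam e')"
    have h1: "e' \<in> ?F" using h by blast
    have "lam e' \<le> lam e" using emax h1 by blast
    moreover have "lam e \<le> lam e'" using h e(1) by blast
    ultimately have eq: "lam e' = lam e" by (rule order_antisym)
    show "e' = e"
    proof (rule ccontr)
      assume ne: "e' \<noteq> e"
      have "v \<in> e' \<inter> e" using h e(1) by blast
      hence "e' \<inter> e \<noteq> {}" by blast
      hence "lam e' \<noteq> lam e" using proper[of e' e] h e(1) ne by blast
      thus False using eq by simp
    qed
  qed
  show ?thesis using theI'[OF ex] unfolding eplus_def .
qed

lemma A_max:
  assumes "(v, u) \<in> A" "w \<in> V" "w \<noteq> v" "w \<noteq> u"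
  shows "lam {v, w} < lam {v, u}"
proof -
  have a: "v \<in> V" "u \<in> V" "u \<noteq> v" "{u, v} = eplus V lam v" using A_sub[OF assms(1)] by auto
  have "{v, w} \<in> clique_edges V" using a assms by (simp add: edge_iff)
  hence "lam {v, w} \<le> lam (eplus V lam v)" using eplus_prop[OF a(1,2,3)] by blast
  hence "lam {v, w} \<le> lam {u, v}" using a(4) by metis
  moreover have "lam {v, w} \<noteq> lam {v, u}"
  proof (rule proper)
    show "{v, w} \<in> clique_edges V" "{v, u} \<in> clique_edges V" using a(1,2,3) assms(2,3) by (simp_all add: edge_iff)
    show "{v, w} \<noteq> {v, u}" using assms(3,4) by (simp add: doubleton_eq_iff)
    show "{v, w} \<inter> {v, u} \<noteq> {}" by blast
  qed
  ultimately show ?thesis by (simp add: insert_commute)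
qed

lemma finA: "finite A"
proof -
  have "A \<subseteq> V \<times> V" using A_sub by auto
  thus ?thesis using finV finite_subset by blast
qed

lemma indeg0: "indeg A v = 0 \<Longrightarrow> (u, v) \<notin> A"
proof -
  have "{u. (u, v) \<in> A} \<subseteq> fst ` A" by force
  hence "finite {u. (u, v) \<in> A}" using finA finite_subset by blast
  thus "indeg A v = 0 \<Longrightarrow> (u, v) \<notin> A" unfolding indeg_def by auto
qed

lemma exists_min:
  assumes "(u, v) \<in> A" shows "\<exists>m. min_in_arc lam A m v"
proof -
  let ?W = "{w. (w, v) \<in> A}"
  have "?W \<subseteq> fst ` A" by force
  hence fin: "finite ?W" using finA finite_subset by blast
  have ne: "(\<lambda>w. lam {w, v}) ` ?W \<noteq> {}" using assms by blast
  have "Min ((\<lambda>w. lam {w, v}) ` ?W) \<in> (\<lambda>w. lam {w, v}) ` ?W" using fin ne by simp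
  then obtain m where m: "m \<in> ?W" "lam {m, v} = Min ((\<lambda>w. lam {w, v}) ` ?W)" by auto
  have "\<forall>w. (w, v) \<in> A \<longrightarrow> lam {m, v} \<le> lam {w, v}" using m fin by simp
  thus ?thesis using m unfolding min_in_arc_def by blast
qed


abbreviation "T \<equiv> backward_ET lam A"

lemma T_cases: "(a, b) \<in> T \<Longrightarrow> ((a, b) \<in> A \<and> (indeg A b < 2 \<or> min_in_arc lam A a b)) \<or>
   ((b, a) \<in> A \<and> indeg A a \<ge> 2 \<and> \<not> min_in_arc lam A b a \<and> indeg A b = 0)"
  unfolding backward_ET_def by auto

lemma T_sub: "(a, b) \<in> T \<Longrightarrow> a \<in> V \<and> b \<in> V \<and> a \<noteq> b"
  using T_cases A_sub by blast

lemma finT: "finite T"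
proof -
  have "T \<subseteq> V \<times> V" using T_sub by auto
  thus ?thesis using finV finite_subset by blast
qed

lemma T_incr:
  assumes wz: "(w, z) \<in> T" and zy: "(z, y) \<in> T"
  shows "lam {w, z} < lam {z, y}"
proof -
  have w: "w \<in> V" "w \<noteq> z" using T_sub[OF wz] by auto
  show ?thesis
  proof (cases "(z, y) \<in> A \<and> (indeg A y < 2 \<or> min_in_arc lam A z y)")
    case True
    have "w \<noteq> y"
    proof
      assume "w = y"
      hence "(y, z) \<in> T" using wz by simp
      thus False using T_cases[of y z] True A_asym by auto
    qed
    hence "lam {z, w} < lam {z, y}" using A_max[of z y w] True w by simp
    thus ?thesis by (simp add: insert_commute)
  next
    case False
    hence R: "(y, z) \<in> A" "indeg A z \<ge> 2" "\<not> min_in_arc lam A y z" "indeg A y = 0"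
      using T_cases[OF zy] by auto
    have K: "(w, z) \<in> A" "min_in_arc lam A w z"
      using T_cases[OF wz] R(2) indeg0[of z] by auto
    have "lam {w, z} \<le> lam {y, z}" using K(2) R(1) unfolding min_in_arc_def by blast
    moreover have "w \<noteq> y" using K(2) R(3) by auto
    moreover have "lam {w, z} \<noteq> lam {y, z}"
    proof (rule proper)
      show "{w, z} \<in> clique_edges V" "{y, z} \<in> clique_edges V" using A_sub[OF K(1)] A_sub[OF R(1)]
        by (metis edge_iff)+
      show "{w, z} \<noteq> {y, z}" using \<open>w \<noteq> y\<close> w by (simp add: doubleton_eq_iff)
      show "{w, z} \<inter> {y, z} \<noteq> {}" by blast
    qed
    ultimately show ?thesis by (simp add: insert_commute)
  qed
qed

lemma coll_arc:
  assumes c: "collector V T z" and zy: "(z, y) \<in> T"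
  shows "(z, y) \<in> A"
proof (rule ccontr)
  assume "(z, y) \<notin> A"
  hence R: "(y, z) \<in> A" "indeg A z \<ge> 2" using T_cases[OF zy] by auto
  obtain m where m: "min_in_arc lam A m z" using exists_min[OF R(1)] by blast
  hence "(m, z) \<in> T" unfolding backward_ET_def min_in_arc_def by blast
  moreover have "finite {u. (u, z) \<in> T}"
  proof -
    have "{u. (u, z) \<in> T} \<subseteq> fst ` T" by force
    thus ?thesis using finT finite_subset by blast
  qed
  ultimately have "indeg T z \<noteq> 0" unfolding indeg_def by auto
  thus False using c unfolding collector_def by simp
qed

abbreviation "S \<equiv> fireworks_cover V T"

lemma S_T: "(a, b) \<in> T \<Longrightarrow> {a, b} \<in> S"
proof -
  assume h: "(a, b) \<in> T"
  hence "{a, b} \<in> clique_edges V" using T_sub[OF h] edge_iff by metis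
  thus "{a, b} \<in> S" using h unfolding fireworks_cover_def by blast
qed

lemma S_coll: "collector V T y \<Longrightarrow> x \<in> V \<Longrightarrow> x \<noteq> y \<Longrightarrow> {y, x} \<in> S"
proof -
  assume h: "collector V T y" "x \<in> V" "x \<noteq> y"
  hence "{y, x} \<in> clique_edges V" using edge_iff unfolding collector_def by metis
  thus "{y, x} \<in> S" using h unfolding fireworks_cover_def by blast
qed

lemma S_sub: "S \<subseteq> clique_edges V"
  unfolding fireworks_cover_def by blast

lemma main:
  shows "(z, y) \<in> T \<Longrightarrow> x \<in> V \<Longrightarrow> x \<noteq> y \<Longrightarrow> \<exists>qs. journey V lam S x y (qs @ [z, y])"
proof (induction "lam {z, y}" arbitrary: z y rule: less_induct)
  case less
  have zy: "z \<in> V" "y \<in> V" "z \<noteq> y" using T_sub[OF less.prems(1)] by auto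
  have ezy: "{z, y} \<in> S" "{z, y} \<in> clique_edges V" using S_T[OF less.prems(1)] zy by (auto simp: edge_iff)
  show ?case
  proof (cases "x = z")
    case True
    thus ?thesis using journey2[OF ezy] by (intro exI[of _ "[]"]) simp
  next
    case xz: False
    show ?thesis
    proof (cases "collector V T z")
      case True
      have A: "(z, y) \<in> A" using coll_arc[OF True less.prems(1)] .
      have "lam {z, x} < lam {z, y}" using A_max[OF A less.prems(2)] xz less.prems(3) by simp
      hence l: "lam {x, z} < lam {z, y}" by (simp add: insert_commute)
      have "{z, x} \<in> S" using S_coll[OF True less.prems(2)] xz by blast
      hence e1: "{x, z} \<in> S" by (simp add: insert_commute)
      have e2: "{x, z} \<in> clique_edges V" using zy less.prems(2) xz edge_iff by metis
      have "journey V lam S x z ([] @ [x, z])" using journey2[OF e1 e2] by simp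
      hence "journey V lam S x y ([] @ [x, z, y])" using journey_snoc[OF _ ezy l] by blast
      thus ?thesis by (intro exI[of _ "[x]"]) simp
    next
      case False
      have "indeg T z \<noteq> 0" using False zy unfolding collector_def by simp
      hence "{u. (u, z) \<in> T} \<noteq> {}" unfolding indeg_def by (intro notI) simp
      then obtain w where wz: "(w, z) \<in> T" by blast
      have l: "lam {w, z} < lam {z, y}" using T_incr[OF wz less.prems(1)] .
      obtain qs where "journey V lam S x z (qs @ [w, z])" using less.hyps[OF l wz less.prems(2) xz] by blast
      hence "journey V lam S x y (qs @ [w, z, y])" using journey_snoc[OF _ ezy l] by blast
      thus ?thesis by (intro exI[of _ "qs @ [w]"]) simp
    qed
  qed
qed

end

theorem theorem4:
  fixes V :: "'a set" and lam :: "'a set \<Rightarrow> nat" and Eplus :: "('a \<times> 'a) set"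
  assumes "simple_temporal_clique V lam"
    and "is_Eplus V lam Eplus"
  shows "temporal_spanner V lam (fireworks_cover V (backward_ET lam Eplus))"
proof -
  note m = main[OF assms]
  show ?thesis unfolding temporal_spanner_def
  proof (intro conjI ballI impI allI)
    show "fireworks_cover V (backward_ET lam Eplus) \<subseteq> clique_edges V" using S_sub[OF assms] .
  next
    fix x y assume xy: "x \<in> V" "y \<in> V" "x \<noteq> y"
    show "\<exists>ps. journey V lam (fireworks_cover V (backward_ET lam Eplus)) x y ps"
    proof (cases "collector V (backward_ET lam Eplus) y")
      case True
      have "{y, x} \<in> fireworks_cover V (backward_ET lam Eplus)" using S_coll[OF assms True xy(1,3)] .
      hence e1: "{x, y} \<in> fireworks_cover V (backward_ET lam Eplus)" by (simp add: insert_commute)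
      have e2: "{x, y} \<in> clique_edges V" using xy edge_iff by metis
      show ?thesis using journey2[OF e1 e2] by blast
    next
      case False
      have "indeg (backward_ET lam Eplus) y \<noteq> 0" using False xy unfolding collector_def by simp
      hence "{u. (u, y) \<in> backward_ET lam Eplus} \<noteq> {}" unfolding indeg_def by (intro notI) simp
      then obtain z where "(z, y) \<in> backward_ET lam Eplus" by blast
      thus ?thesis using m xy by blast
    qed
  qed
qed

end
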